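(* Let $N\ge1$, $L>0$, $\epsilon>0$, $\sigma_w^2>0$, $P_a>0$, $\chi_{aw}>0$, $\chi_{rw}>0$, let $h_{ar_1},\dots,h_{ar_N}\in\mathbb{C}$ be fixed, and let $\rho_n\in[0,1]$, $\theta_n\in[0,2\pi)$ for $n=1,\dots,N$. Let $h_{aw}\sim\mathcal{CN}(0,\chi_{aw})$ and $h_{rw_1},\dots,h_{rw_N}\sim\mathcal{CN}(0,\chi_{rw})$ be independent random variables, and set $$X=\Big|\sum_{n=1}^N h_{rw_n}^*\rho_n e^{j\theta_n}h_{ar_n}+h_{aw}\Big|^2,\qquad \mathcal{D}=L\left[\ln\!\left(1+\frac{P_aX}{\sigma_w^2}\right)-\frac{P_aX}{P_aX+\sigma_w^2}\right].$$ Then the covertness constraint $\mathbb{E}_X[\mathcal{D}]\le 2\epsilon^2$ is equivalent to $$\frac{P_a}{\sigma_w^2}\left(\chi_{rw}\sum_{n=1}^N\rho_n^2|h_{ar_n}|^2+\chi_{aw}\right)\le\bar{\epsilon},$$ where $\bar{\epsilon}>0$ is the solution of $$\left(1+\frac{1}{\bar{\epsilon}}\right)e^{1/\bar{\epsilon}}E_1\!\left(\frac{1}{\bar{\epsilon}}\right)-1-\frac{2\epsilon^2}{L}=0,$$ with $E_1(x)=\int_x^\infty \frac{e^{-t}}{t}\,dt$ the exponential integral.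
   Context: $\mathcal{CN}(0,\sigma^2)$ denotes a circularly-symmetric complex Gaussian distribution with mean $0$ and variance $\sigma^2$. In the model, $h_{aw}$ is the direct Alice–Willie channel, $h_{rw_n}$ the channel from the $n$-th IRS element to Willie, $h_{ar_n}$ the Alice-to-$n$-th-IRS-element channel, $\rho_n,\theta_n$ the IRS reflection amplitude and phase, $P_a$ Alice's transmit power, $\sigma_w^2$ Willie's noise variance, and $\mathcal{D}$ the Kullback–Leibler divergence between Willie's observations under the two hypotheses over $L$ channel uses. *)

theory Defs
  imports "HOL-Probability.Probability"
begin

definition E1 :: "real \<Rightarrow> real" where
  "E1 x = (LBINT t=ereal x..\<infinity>. exp (- t) / t)"

definition cgauss :: "'a measure \<Rightarrow> ('a \<Rightarrow> complex) \<Rightarrow> real \<Rightarrow> bool" where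
  "cgauss M X chi \<longleftrightarrow>
     X \<in> borel_measurable M \<and>
     prob_space.indep_var M borel (\<lambda>\<omega>. Re (X \<omega>)) borel (\<lambda>\<omega>. Im (X \<omega>)) \<and>
     distributed M lborel (\<lambda>\<omega>. Re (X \<omega>)) (normal_density 0 (sqrt (chi / 2))) \<and>
     distributed M lborel (\<lambda>\<omega>. Im (X \<omega>)) (normal_density 0 (sqrt (chi / 2)))"

end

theory Submission
  imports Defs "HOL-Real_Asymp.Real_Asymp"
begin

definition I2 :: "(complex \<Rightarrow> ennreal) \<Rightarrow> ennreal" where
  "I2 F = (\<integral>\<^sup>+a. \<integral>\<^sup>+b. F (Complex a b) \<partial>lborel \<partial>lborel)"

lemma meas_Complex_pair[measurable]:
  assumes [measurable]: "f \<in> borel_measurable M" "g \<in> borel_measurable M"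
  shows "(\<lambda>x. Complex (f x) (g x)) \<in> borel_measurable M"
proof -
  have "(\<lambda>x. Complex (f x) (g x)) = (\<lambda>x. complex_of_real (f x) + \<i> * complex_of_real (g x))"
    by (simp add: Complex_eq)
  moreover have "(\<lambda>x. complex_of_real (f x) + \<i> * complex_of_real (g x)) \<in> borel_measurable M"
    by measurable
  ultimately show ?thesis by simp
qed

lemma I2_shearX:
  assumes [measurable]: "F \<in> borel_measurable borel"
  shows "I2 (\<lambda>z. F (Complex (Re z + t * Im z) (Im z))) = I2 F"
proof -
  have "I2 (\<lambda>z. F (Complex (Re z + t * Im z) (Im z))) =
     (\<integral>\<^sup>+a. \<integral>\<^sup>+b. F (Complex (a + t * b) b) \<partial>lborel \<partial>lborel)"
    by (simp add: I2_def)
  also have "\<dots> = (\<integral>\<^sup>+b. \<integral>\<^sup>+a. F (Complex (a + t * b) b) \<partial>lborel \<partial>lborel)"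
    by (rule lborel_pair.Fubini'[symmetric]) measurable
  also have "\<dots> = (\<integral>\<^sup>+b. \<integral>\<^sup>+a. F (Complex a b) \<partial>lborel \<partial>lborel)"
  proof (rule nn_integral_cong)
    fix b
    show "(\<integral>\<^sup>+a. F (Complex (a + t * b) b) \<partial>lborel) = (\<integral>\<^sup>+a. F (Complex a b) \<partial>lborel)"
      using nn_integral_real_affine[of "\<lambda>a. F (Complex a b)" 1 "t*b"]
      by (simp add: add.commute)
  qed
  also have "\<dots> = I2 F"
    unfolding I2_def by (rule lborel_pair.Fubini') measurable
  finally show ?thesis .
qed

lemma I2_shearY:
  assumes [measurable]: "F \<in> borel_measurable borel"
  shows "I2 (\<lambda>z. F (Complex (Re z) (Im z + t * Re z))) = I2 F"
  unfolding I2_def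
proof (rule nn_integral_cong)
  fix a
  show "(\<integral>\<^sup>+b. F (Complex (Re (Complex a b)) (Im (Complex a b) + t * Re (Complex a b))) \<partial>lborel) =
        (\<integral>\<^sup>+b. F (Complex a b) \<partial>lborel)"
    using nn_integral_real_affine[of "\<lambda>b. F (Complex a b)" 1 "t*a"]
    by (simp add: add.commute)
qed

lemma I2_rot_aux:
  assumes [measurable]: "F \<in> borel_measurable borel" and u: "cmod u = 1" and p: "Re u \<noteq> -1"
  shows "I2 (\<lambda>z. F (u * z)) = I2 F"
proof -
  define p q where "p = Re u" and "q = Im u"
  have pq: "p^2 + q^2 = 1" using u unfolding p_def q_def cmod_def by simp
  have p1: "1 + p \<noteq> 0" using p unfolding p_def by simp
  define \<alpha> where "\<alpha> = - q / (1 + p)"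
  define G1 where "G1 = (\<lambda>z. F (Complex (Re z + \<alpha> * Im z) (Im z)))"
  define G2 where "G2 = (\<lambda>z. G1 (Complex (Re z) (Im z + q * Re z)))"
  define G3 where "G3 = (\<lambda>z. G2 (Complex (Re z + \<alpha> * Im z) (Im z)))"
  have [measurable]: "G1 \<in> borel_measurable borel" "G2 \<in> borel_measurable borel"
    unfolding G1_def G2_def by measurable
  have "I2 G3 = I2 G2" unfolding G3_def by (rule I2_shearX) measurable
  also have "\<dots> = I2 G1" unfolding G2_def by (rule I2_shearY) measurable
  also have "\<dots> = I2 F" unfolding G1_def by (rule I2_shearX) measurable
  finally have *: "I2 G3 = I2 F" .
  have e1: "1 + \<alpha> * q = p" using pq p1 unfolding \<alpha>_def by (simp add: field_simps power2_eq_square)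
  have a1: "\<alpha> * (1 + p) = - q" using p1 by (simp add: \<alpha>_def)
  have "(1+p)^2 * (2 * \<alpha> + \<alpha>^2 * q) = (1+p)^2 * (- q)" using a1 pq by algebra
  then have e2: "2 * \<alpha> + \<alpha>^2 * q = - q" using p1 by (metis mult_left_cancel mult_minus_right power_not_zero)
  have "G3 z = F (u * z)" for z
  proof -
    have "u * z = Complex (Re z * (1 + \<alpha> * q) + Im z * (2 * \<alpha> + \<alpha>^2 * q)) (q * Re z + Im z * (1 + \<alpha> * q))"
      unfolding e1 e2 by (simp add: complex_eq_iff p_def q_def algebra_simps)
    then show ?thesis unfolding G3_def G2_def G1_def
      by (simp add: algebra_simps power2_eq_square)
  qed
  then have "G3 = (\<lambda>z. F (u * z))" by auto
  with * show ?thesis by simp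
qed

lemma I2_rot:
  assumes [measurable]: "F \<in> borel_measurable borel" and u: "cmod u = 1"
  shows "I2 (\<lambda>z. F (u * z)) = I2 F"
proof (cases "Re u = -1")
  case False then show ?thesis using I2_rot_aux u by auto
next
  case True
  then have "u = -1" using u by (simp add: complex_eq_iff cmod_def)
  have "I2 (\<lambda>z. F (u * z)) = I2 (\<lambda>z. (\<lambda>w. F (\<i> * w)) (\<i> * z))"
    using \<open>u = -1\<close> by (simp add: mult.assoc[symmetric])
  also have "\<dots> = I2 (\<lambda>w. F (\<i> * w))" by (rule I2_rot_aux) auto
  also have "\<dots> = I2 F" by (rule I2_rot_aux) auto
  finally show ?thesis .
qed

definition nd :: "real \<Rightarrow> real \<Rightarrow> real" where
  "nd v x = normal_density 0 (sqrt v) x"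

lemma nd_nonneg[simp]: "0 \<le> nd v x" by (simp add: nd_def)

lemma nd_meas[measurable]: "nd v \<in> borel_measurable borel"
  unfolding nd_def[abs_def] by measurable

lemma nd_uminus[simp]: "nd v (- x) = nd v x" by (simp add: nd_def normal_density_def)

definition CN :: "'a measure \<Rightarrow> ('a \<Rightarrow> complex) \<Rightarrow> real \<Rightarrow> bool" where
  "CN M W v \<longleftrightarrow> 0 < v \<and> W \<in> borel_measurable M \<and>
     (\<forall>\<Phi>\<in>borel_measurable borel. (\<integral>\<^sup>+\<omega>. \<Phi> (W \<omega>) \<partial>M) =
        I2 (\<lambda>z. \<Phi> z * ennreal (nd v (Re z)) * ennreal (nd v (Im z))))"

lemma I2_split:
  assumes [measurable]: "\<Phi> \<in> borel_measurable borel" "h \<in> borel_measurable borel" "k \<in> borel_measurable borel"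
  shows "I2 (\<lambda>z. \<Phi> z * ennreal (h (Re z)) * ennreal (k (Im z))) =
    (\<integral>\<^sup>+a. (\<integral>\<^sup>+b. \<Phi> (Complex a b) * ennreal (k b) \<partial>lborel) * ennreal (h a) \<partial>lborel)"
  unfolding I2_def
  by (intro nn_integral_cong, subst nn_integral_multc[symmetric]) (auto simp: mult_ac)

lemma nd_scale:
  assumes "r > 0" "v > 0"
  shows "r * nd (r\<^sup>2 * v) (r * a) = nd v a"
proof -
  have "sqrt (2 * pi * (r\<^sup>2 * v)) = r * sqrt (2 * pi * v)"
    using assms by (simp add: real_sqrt_mult)
  then show ?thesis using assms
    by (simp add: nd_def normal_density_def power_mult_distrib)
qed

lemma scale1:
  assumes [measurable]: "f \<in> borel_measurable borel" and r: "r > 0" and v: "v > 0"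
  shows "(\<integral>\<^sup>+a. f (r * a) * ennreal (nd v a) \<partial>lborel) = (\<integral>\<^sup>+x. f x * ennreal (nd (r\<^sup>2 * v) x) \<partial>lborel)"
proof -
  have "(\<integral>\<^sup>+x. f x * ennreal (nd (r\<^sup>2 * v) x) \<partial>lborel) =
        ennreal r * (\<integral>\<^sup>+a. f (r * a) * ennreal (nd (r\<^sup>2 * v) (r * a)) \<partial>lborel)"
    using nn_integral_real_affine[of "\<lambda>x. f x * ennreal (nd (r\<^sup>2 * v) x)" r 0] r by simp
  also have "\<dots> = (\<integral>\<^sup>+a. f (r * a) * ennreal (r * nd (r\<^sup>2 * v) (r * a)) \<partial>lborel)"
    by (subst nn_integral_cmult[symmetric]) (auto simp: ennreal_mult r[THEN less_imp_le] mult_ac intro!: nn_integral_cong)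
  also have "\<dots> = (\<integral>\<^sup>+a. f (r * a) * ennreal (nd v a) \<partial>lborel)"
    using nd_scale[OF r v] by simp
  finally show ?thesis ..
qed

lemma nd_prod:
  assumes "v > 0"
  shows "nd v a * nd v b = exp (- (a\<^sup>2 + b\<^sup>2) / (2 * v)) / (2 * pi * v)"
proof -
  have "sqrt (2 * pi * v) * sqrt (2 * pi * v) = 2 * pi * v" using assms by simp
  then show ?thesis using assms
    by (simp add: nd_def normal_density_def exp_add[symmetric] field_simps)
qed

lemma CN_scale:
  assumes CN: "CN M W v" and c: "c \<noteq> 0"
  shows "CN M (\<lambda>\<omega>. c * W \<omega>) ((cmod c)\<^sup>2 * v)"
proof -
  have v: "v > 0" and [measurable]: "W \<in> borel_measurable M" using CN by (auto simp: CN_def)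
  define r where "r = cmod c"
  have r: "r > 0" using c by (simp add: r_def)
  define u where "u = c / complex_of_real r"
  have u: "cmod u = 1" using r c by (simp add: u_def norm_divide r_def)
  have cu: "c = u * complex_of_real r" using r by (simp add: u_def)
  define w where "w = (\<lambda>z. ennreal (exp (- (cmod z)\<^sup>2 / (2 * v)) / (2 * pi * v)))"
  have [measurable]: "w \<in> borel_measurable borel" unfolding w_def by measurable
  have wnd: "ennreal (nd v (Re z)) * ennreal (nd v (Im z)) = w z" for z
    using v by (simp add: w_def ennreal_mult[symmetric] nd_prod cmod_power2)
  have wu: "w (z * u) = w z" for z using u by (simp add: w_def norm_mult)
  show ?thesis
    unfolding CN_def
  proof (intro conjI ballI)
    show "0 < (cmod c)\<^sup>2 * v" using v c by simp
    show "(\<lambda>\<omega>. c * W \<omega>) \<in> borel_measurable M" by measurable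
    fix \<Phi> :: "complex \<Rightarrow> ennreal" assume [measurable]: "\<Phi> \<in> borel_measurable borel"
    have cr: "complex_of_real r * Complex a b = Complex (r*a) (r*b)" for a b by (simp add: complex_eq_iff)
    define F where "F = (\<lambda>z. \<Phi> (complex_of_real r * z) * w z)"
    have [measurable]: "F \<in> borel_measurable borel" unfolding F_def by measurable
    have "(\<integral>\<^sup>+\<omega>. \<Phi> (c * W \<omega>) \<partial>M) = I2 (\<lambda>z. \<Phi> (c * z) * ennreal (nd v (Re z)) * ennreal (nd v (Im z)))"
      using CN unfolding CN_def by (auto dest!: bspec[of _ _ "\<lambda>z. \<Phi> (c * z)"])
    also have "\<dots> = I2 (\<lambda>z. F (u * z))"
      unfolding F_def by (simp add: wu mult.assoc wnd cu mult.commute[of u])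
    also have "\<dots> = I2 F" by (rule I2_rot) (auto simp: u)
    also have "\<dots> = I2 (\<lambda>z. (\<lambda>z. \<Phi> (complex_of_real r * z)) z * ennreal (nd v (Re z)) * ennreal (nd v (Im z)))"
      unfolding F_def by (simp add: mult.assoc wnd)
    also have "\<dots> = (\<integral>\<^sup>+a. (\<integral>\<^sup>+b. \<Phi> (Complex (r * a) (r * b)) * ennreal (nd v b) \<partial>lborel) * ennreal (nd v a) \<partial>lborel)"
      by (subst I2_split) (auto simp: cr)
    also have "\<dots> = (\<integral>\<^sup>+a. (\<integral>\<^sup>+b. \<Phi> (Complex (r * a) b) * ennreal (nd (r\<^sup>2 * v) b) \<partial>lborel) * ennreal (nd v a) \<partial>lborel)"
      by (intro nn_integral_cong arg_cong2[where f="(*)"] refl scale1[OF _ r v, of "\<lambda>b. \<Phi> (Complex _ b)"]) measurable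
    also have "\<dots> = (\<integral>\<^sup>+a. (\<integral>\<^sup>+b. \<Phi> (Complex a b) * ennreal (nd (r\<^sup>2 * v) b) \<partial>lborel) * ennreal (nd (r\<^sup>2 * v) a) \<partial>lborel)"
      by (rule scale1[OF _ r v, of "\<lambda>a. \<integral>\<^sup>+b. \<Phi> (Complex a b) * ennreal (nd (r\<^sup>2 * v) b) \<partial>lborel"]) measurable
    also have "\<dots> = I2 (\<lambda>z. \<Phi> z * ennreal (nd ((cmod c)\<^sup>2 * v) (Re z)) * ennreal (nd ((cmod c)\<^sup>2 * v) (Im z)))"
      by (subst I2_split) (auto simp: r_def)
    finally show "(\<integral>\<^sup>+\<omega>. \<Phi> (c * W \<omega>) \<partial>M) = I2 (\<lambda>z. \<Phi> z * ennreal (nd ((cmod c)\<^sup>2 * v) (Re z)) * ennreal (nd ((cmod c)\<^sup>2 * v) (Im z)))" .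
  qed
qed

lemma cnj_meas[measurable]: "cnj \<in> borel_measurable borel"
proof -
  have h: "cnj = (\<lambda>z. Complex (Re z) (- Im z))" by (auto simp: complex_eq_iff)
  have m: "(\<lambda>z. Complex (Re z) (- Im z)) \<in> borel_measurable borel" by measurable
  show ?thesis by (subst h) (rule m)
qed

lemma CN_cnj:
  assumes CN: "CN M W v"
  shows "CN M (\<lambda>\<omega>. cnj (W \<omega>)) v"
proof -
  have v: "v > 0" and [measurable]: "W \<in> borel_measurable M" using CN by (auto simp: CN_def)
  show ?thesis
    unfolding CN_def
  proof (intro conjI ballI)
    show "0 < v" by fact
    have "(\<lambda>\<omega>. cnj (W \<omega>)) = (\<lambda>\<omega>. Complex (Re (W \<omega>)) (- Im (W \<omega>)))" by (auto simp: complex_eq_iff)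
    then show "(\<lambda>\<omega>. cnj (W \<omega>)) \<in> borel_measurable M" by simp
    fix \<Phi> :: "complex \<Rightarrow> ennreal" assume [measurable]: "\<Phi> \<in> borel_measurable borel"
    have cc: "cnj (Complex a b) = Complex a (-b)" for a b by (simp add: complex_eq_iff)
    have "(\<integral>\<^sup>+\<omega>. \<Phi> (cnj (W \<omega>)) \<partial>M) = I2 (\<lambda>z. \<Phi> (cnj z) * ennreal (nd v (Re z)) * ennreal (nd v (Im z)))"
      using CN unfolding CN_def by (auto dest!: bspec[of _ _ "\<lambda>z. \<Phi> (cnj z)"])
    also have "\<dots> = (\<integral>\<^sup>+a. (\<integral>\<^sup>+b. \<Phi> (Complex a (- b)) * ennreal (nd v b) \<partial>lborel) * ennreal (nd v a) \<partial>lborel)"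
      by (subst I2_split) (auto simp: cc)
    also have "\<dots> = (\<integral>\<^sup>+a. (\<integral>\<^sup>+b. \<Phi> (Complex a b) * ennreal (nd v b) \<partial>lborel) * ennreal (nd v a) \<partial>lborel)"
    proof -
      have "(\<integral>\<^sup>+b. \<Phi> (Complex a (- b)) * ennreal (nd v b) \<partial>lborel) = (\<integral>\<^sup>+b. \<Phi> (Complex a b) * ennreal (nd v b) \<partial>lborel)" for a
        using nn_integral_real_affine[of "\<lambda>b. \<Phi> (Complex a b) * ennreal (nd v b)" "-1" 0] by simp
      then show ?thesis by simp
    qed
    also have "\<dots> = I2 (\<lambda>z. \<Phi> z * ennreal (nd v (Re z)) * ennreal (nd v (Im z)))"
      by (subst I2_split) auto
    finally show "(\<integral>\<^sup>+\<omega>. \<Phi> (cnj (W \<omega>)) \<partial>M) = I2 (\<lambda>z. \<Phi> z * ennreal (nd v (Re z)) * ennreal (nd v (Im z)))" .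
  qed
qed

lemma conv1:
  assumes [measurable]: "G \<in> borel_measurable borel" and v1: "v1 > 0" and v2: "v2 > 0"
  shows "(\<integral>\<^sup>+a1. (\<integral>\<^sup>+a2. G (a1 + a2) * ennreal (nd v2 a2) \<partial>lborel) * ennreal (nd v1 a1) \<partial>lborel)
       = (\<integral>\<^sup>+x. G x * ennreal (nd (v1 + v2) x) \<partial>lborel)"
proof -
  have "(\<integral>\<^sup>+a1. (\<integral>\<^sup>+a2. G (a1 + a2) * ennreal (nd v2 a2) \<partial>lborel) * ennreal (nd v1 a1) \<partial>lborel)
      = (\<integral>\<^sup>+a1. (\<integral>\<^sup>+x. G x * ennreal (nd v2 (x - a1)) \<partial>lborel) * ennreal (nd v1 a1) \<partial>lborel)"
  proof -
    have "(\<integral>\<^sup>+a2. G (a1 + a2) * ennreal (nd v2 a2) \<partial>lborel) = (\<integral>\<^sup>+x. G x * ennreal (nd v2 (x - a1)) \<partial>lborel)" for a1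
      using nn_integral_real_affine[of "\<lambda>x. G x * ennreal (nd v2 (x - a1))" 1 a1] by simp
    then show ?thesis by simp
  qed
  also have "\<dots> = (\<integral>\<^sup>+a1. (\<integral>\<^sup>+x. G x * ennreal (nd v2 (x - a1) * nd v1 a1) \<partial>lborel) \<partial>lborel)"
    by (intro nn_integral_cong, subst nn_integral_multc[symmetric]) (auto simp: ennreal_mult mult_ac)
  also have "\<dots> = (\<integral>\<^sup>+x. (\<integral>\<^sup>+a1. G x * ennreal (nd v2 (x - a1) * nd v1 a1) \<partial>lborel) \<partial>lborel)"
    by (rule lborel_pair.Fubini'[symmetric]) measurable
  also have "\<dots> = (\<integral>\<^sup>+x. G x * (\<integral>\<^sup>+a1. ennreal (nd v2 (x - a1) * nd v1 a1) \<partial>lborel) \<partial>lborel)"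
    by (intro nn_integral_cong nn_integral_cmult) measurable
  also have "\<dots> = (\<integral>\<^sup>+x. G x * ennreal (nd (v1 + v2) x) \<partial>lborel)"
  proof -
    have "(\<integral>\<^sup>+a1. ennreal (nd v2 (x - a1) * nd v1 a1) \<partial>lborel) = ennreal (nd (v1 + v2) x)" for x
    proof -
    have "(\<integral>\<^sup>+a1. ennreal (normal_density 0 (sqrt v2) (x - a1) * normal_density 0 (sqrt v1) a1) \<partial>lborel)
        = normal_density 0 (sqrt ((sqrt v2)\<^sup>2 + (sqrt v1)\<^sup>2)) x"
      using conv_normal_density_zero_mean[of "sqrt v2" "sqrt v1"] v1 v2 by (auto dest: fun_cong[of _ _ x])
    then show ?thesis
      using v1 v2 by (simp add: nd_def add.commute)
    qed
    then show ?thesis by simp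
  qed
  finally show ?thesis .
qed

lemma CN_add:
  assumes P: "prob_space M" and A: "CN M A v1" and B: "CN M B v2"
    and ind: "prob_space.indep_var M borel A borel B"
  shows "CN M (\<lambda>\<omega>. A \<omega> + B \<omega>) (v1 + v2)"
proof -
  interpret prob_space M by fact
  have v1: "v1 > 0" and [measurable]: "A \<in> borel_measurable M" using A by (auto simp: CN_def)
  have v2: "v2 > 0" and [measurable]: "B \<in> borel_measurable M" using B by (auto simp: CN_def)
  interpret DA: prob_space "distr M borel A" by (rule prob_space_distr) measurable
  interpret DB: prob_space "distr M borel B" by (rule prob_space_distr) measurable
  interpret PP: pair_sigma_finite "distr M borel A" "distr M borel B"
    by (intro pair_sigma_finite.intro prob_space_imp_sigma_finite) unfold_locales
  have jd: "distr M borel A \<Otimes>\<^sub>M distr M borel B = distr M (borel \<Otimes>\<^sub>M borel) (\<lambda>x. (A x, B x))"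
    using ind indep_var_distribution_eq by blast
  show ?thesis
    unfolding CN_def
  proof (intro conjI ballI)
    show "0 < v1 + v2" using v1 v2 by simp
    show "(\<lambda>\<omega>. A \<omega> + B \<omega>) \<in> borel_measurable M" by measurable
    fix \<Phi> :: "complex \<Rightarrow> ennreal" assume [measurable]: "\<Phi> \<in> borel_measurable borel"
    have ca: "Complex a1 b1 + Complex a b = Complex (a1+a) (b1+b)" for a1 b1 a b by (simp add: complex_eq_iff)
    define H where "H = (\<lambda>s. I2 (\<lambda>z. \<Phi> (s + z) * ennreal (nd v2 (Re z)) * ennreal (nd v2 (Im z))))"
    have [measurable]: "H \<in> borel_measurable borel" unfolding H_def I2_def by measurable
    have "(\<integral>\<^sup>+\<omega>. \<Phi> (A \<omega> + B \<omega>) \<partial>M) = (\<integral>\<^sup>+p. \<Phi> (fst p + snd p) \<partial>distr M (borel \<Otimes>\<^sub>M borel) (\<lambda>x. (A x, B x)))"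
      by (subst nn_integral_distr) auto
    also have "\<dots> = (\<integral>\<^sup>+p. \<Phi> (fst p + snd p) \<partial>(distr M borel A \<Otimes>\<^sub>M distr M borel B))"
      by (simp add: jd)
    also have "\<dots> = (\<integral>\<^sup>+s. \<integral>\<^sup>+w. \<Phi> (s + w) \<partial>distr M borel B \<partial>distr M borel A)"
      by (subst DB.nn_integral_fst[symmetric]) auto
    also have "\<dots> = (\<integral>\<^sup>+s. H s \<partial>distr M borel A)"
    proof (intro nn_integral_cong)
      fix s
      have "(\<integral>\<^sup>+w. \<Phi> (s + w) \<partial>distr M borel B) = (\<integral>\<^sup>+\<omega>. \<Phi> (s + B \<omega>) \<partial>M)"
        by (subst nn_integral_distr) auto
      also have "\<dots> = H s"
        using B unfolding CN_def H_def by (auto dest!: bspec[of _ _ "\<lambda>z. \<Phi> (s + z)"])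
      finally show "(\<integral>\<^sup>+w. \<Phi> (s + w) \<partial>distr M borel B) = H s" .
    qed
    also have "\<dots> = (\<integral>\<^sup>+\<omega>. H (A \<omega>) \<partial>M)"
      by (subst nn_integral_distr) auto
    also have "\<dots> = I2 (\<lambda>z. H z * ennreal (nd v1 (Re z)) * ennreal (nd v1 (Im z)))"
      using A unfolding CN_def by auto
    also have "\<dots> = (\<integral>\<^sup>+a1. (\<integral>\<^sup>+b1. (\<integral>\<^sup>+a2. (\<integral>\<^sup>+b2. \<Phi> (Complex (a1 + a2) (b1 + b2)) * ennreal (nd v2 b2) \<partial>lborel)
              * ennreal (nd v2 a2) \<partial>lborel) * ennreal (nd v1 b1) \<partial>lborel) * ennreal (nd v1 a1) \<partial>lborel)"
    proof -
      have "H (Complex a1 b1) = (\<integral>\<^sup>+a2. (\<integral>\<^sup>+b2. \<Phi> (Complex (a1 + a2) (b1 + b2)) * ennreal (nd v2 b2) \<partial>lborel)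
              * ennreal (nd v2 a2) \<partial>lborel)" for a1 b1
        unfolding H_def by (subst I2_split) (auto simp: ca)
      then show ?thesis by (subst I2_split) auto
    qed
    also have "\<dots> = (\<integral>\<^sup>+a1. (\<integral>\<^sup>+a2. (\<integral>\<^sup>+b1. (\<integral>\<^sup>+b2. \<Phi> (Complex (a1 + a2) (b1 + b2)) * ennreal (nd v2 b2) \<partial>lborel)
              * ennreal (nd v1 b1) \<partial>lborel) * ennreal (nd v2 a2) \<partial>lborel) * ennreal (nd v1 a1) \<partial>lborel)"
    proof -
      have "(\<integral>\<^sup>+b1. (\<integral>\<^sup>+a2. (\<integral>\<^sup>+b2. \<Phi> (Complex (a1 + a2) (b1 + b2)) * ennreal (nd v2 b2) \<partial>lborel)
              * ennreal (nd v2 a2) \<partial>lborel) * ennreal (nd v1 b1) \<partial>lborel) =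
           (\<integral>\<^sup>+a2. (\<integral>\<^sup>+b1. (\<integral>\<^sup>+b2. \<Phi> (Complex (a1 + a2) (b1 + b2)) * ennreal (nd v2 b2) \<partial>lborel)
              * ennreal (nd v1 b1) \<partial>lborel) * ennreal (nd v2 a2) \<partial>lborel)" for a1
      proof -
      define Q where "Q = (\<lambda>a2 b1. (\<integral>\<^sup>+b2. \<Phi> (Complex (a1 + a2) (b1 + b2)) * ennreal (nd v2 b2) \<partial>lborel))"
      have [measurable]: "case_prod Q \<in> borel_measurable (lborel \<Otimes>\<^sub>M lborel)" unfolding Q_def by measurable
      have "(\<integral>\<^sup>+b1. (\<integral>\<^sup>+a2. Q a2 b1 * ennreal (nd v2 a2) \<partial>lborel) * ennreal (nd v1 b1) \<partial>lborel)
          = (\<integral>\<^sup>+b1. (\<integral>\<^sup>+a2. Q a2 b1 * ennreal (nd v2 a2) * ennreal (nd v1 b1) \<partial>lborel) \<partial>lborel)"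
        by (intro nn_integral_cong, subst nn_integral_multc[symmetric]) auto
      also have "\<dots> = (\<integral>\<^sup>+a2. (\<integral>\<^sup>+b1. Q a2 b1 * ennreal (nd v2 a2) * ennreal (nd v1 b1) \<partial>lborel) \<partial>lborel)"
        by (rule lborel_pair.Fubini') measurable
      also have "\<dots> = (\<integral>\<^sup>+a2. (\<integral>\<^sup>+b1. Q a2 b1 * ennreal (nd v1 b1) \<partial>lborel) * ennreal (nd v2 a2) \<partial>lborel)"
        by (intro nn_integral_cong, subst nn_integral_multc[symmetric]) (auto simp: mult_ac)
      finally show "(\<integral>\<^sup>+b1. (\<integral>\<^sup>+a2. (\<integral>\<^sup>+b2. \<Phi> (Complex (a1 + a2) (b1 + b2)) * ennreal (nd v2 b2) \<partial>lborel)
              * ennreal (nd v2 a2) \<partial>lborel) * ennreal (nd v1 b1) \<partial>lborel) =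
           (\<integral>\<^sup>+a2. (\<integral>\<^sup>+b1. (\<integral>\<^sup>+b2. \<Phi> (Complex (a1 + a2) (b1 + b2)) * ennreal (nd v2 b2) \<partial>lborel)
              * ennreal (nd v1 b1) \<partial>lborel) * ennreal (nd v2 a2) \<partial>lborel)"
        unfolding Q_def .
      qed
      then show ?thesis by simp
    qed
    also have "\<dots> = (\<integral>\<^sup>+a1. (\<integral>\<^sup>+a2. (\<lambda>x. \<integral>\<^sup>+y. \<Phi> (Complex x y) * ennreal (nd (v1 + v2) y) \<partial>lborel) (a1 + a2)
              * ennreal (nd v2 a2) \<partial>lborel) * ennreal (nd v1 a1) \<partial>lborel)"
    proof -
      have "(\<integral>\<^sup>+b1. (\<integral>\<^sup>+b2. \<Phi> (Complex x (b1 + b2)) * ennreal (nd v2 b2) \<partial>lborel) * ennreal (nd v1 b1) \<partial>lborel)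
         = (\<integral>\<^sup>+y. \<Phi> (Complex x y) * ennreal (nd (v1 + v2) y) \<partial>lborel)" for x
        by (rule conv1[OF _ v1 v2, of "\<lambda>y. \<Phi> (Complex x y)"]) measurable
      then show ?thesis by simp
    qed
    also have "\<dots> = (\<integral>\<^sup>+x. (\<integral>\<^sup>+y. \<Phi> (Complex x y) * ennreal (nd (v1 + v2) y) \<partial>lborel) * ennreal (nd (v1 + v2) x) \<partial>lborel)"
      by (rule conv1[OF _ v1 v2]) measurable
    also have "\<dots> = I2 (\<lambda>z. \<Phi> z * ennreal (nd (v1 + v2) (Re z)) * ennreal (nd (v1 + v2) (Im z)))"
      by (subst I2_split) auto
    finally show "(\<integral>\<^sup>+\<omega>. \<Phi> (A \<omega> + B \<omega>) \<partial>M) = I2 (\<lambda>z. \<Phi> z * ennreal (nd (v1 + v2) (Re z)) * ennreal (nd (v1 + v2) (Im z)))" .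
  qed
qed

lemma cgauss_CN:
  assumes P: "prob_space M" and G: "cgauss M X chi" and chi: "chi > 0"
  shows "CN M X (chi / 2)"
proof -
  interpret prob_space M by fact
  have [measurable]: "X \<in> borel_measurable M"
    and ind: "indep_var borel (\<lambda>\<omega>. Re (X \<omega>)) borel (\<lambda>\<omega>. Im (X \<omega>))"
    and dR: "distributed M lborel (\<lambda>\<omega>. Re (X \<omega>)) (normal_density 0 (sqrt (chi / 2)))"
    and dI: "distributed M lborel (\<lambda>\<omega>. Im (X \<omega>)) (normal_density 0 (sqrt (chi / 2)))"
    using G by (auto simp: cgauss_def)
  define D where "D = density lborel (\<lambda>x. ennreal (nd (chi/2) x))"
  have eR: "distr M borel (\<lambda>\<omega>. Re (X \<omega>)) = D"
  proof -
    have "distr M borel (\<lambda>\<omega>. Re (X \<omega>)) = distr M lborel (\<lambda>\<omega>. Re (X \<omega>))"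
      by (rule distr_cong) auto
    also have "\<dots> = D" using distributed_distr_eq_density[OF dR] by (simp add: D_def nd_def)
    finally show ?thesis .
  qed
  have eI: "distr M borel (\<lambda>\<omega>. Im (X \<omega>)) = D"
  proof -
    have "distr M borel (\<lambda>\<omega>. Im (X \<omega>)) = distr M lborel (\<lambda>\<omega>. Im (X \<omega>))"
      by (rule distr_cong) auto
    also have "\<dots> = D" using distributed_distr_eq_density[OF dI] by (simp add: D_def nd_def)
    finally show ?thesis .
  qed
  interpret DD: prob_space D unfolding eR[symmetric] by (rule prob_space_distr) measurable
  interpret PP: pair_sigma_finite D D
    by (intro pair_sigma_finite.intro prob_space_imp_sigma_finite) unfold_locales
  have jd: "D \<Otimes>\<^sub>M D = distr M (borel \<Otimes>\<^sub>M borel) (\<lambda>\<omega>. (Re (X \<omega>), Im (X \<omega>)))"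
    using ind indep_var_distribution_eq eR eI by metis
  have sD[simp, measurable_cong]: "sets D = sets borel" by (simp add: D_def)
  show ?thesis
    unfolding CN_def
  proof (intro conjI ballI)
    show "0 < chi / 2" using chi by simp
    show "X \<in> borel_measurable M" by simp
    fix \<Phi> :: "complex \<Rightarrow> ennreal" assume [measurable]: "\<Phi> \<in> borel_measurable borel"
    have "(\<integral>\<^sup>+\<omega>. \<Phi> (X \<omega>) \<partial>M) = (\<integral>\<^sup>+\<omega>. \<Phi> (Complex (Re (X \<omega>)) (Im (X \<omega>))) \<partial>M)" by simp
    also have "\<dots> = (\<integral>\<^sup>+p. \<Phi> (Complex (fst p) (snd p)) \<partial>distr M (borel \<Otimes>\<^sub>M borel) (\<lambda>\<omega>. (Re (X \<omega>), Im (X \<omega>))))"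
      by (subst nn_integral_distr) auto
    also have "\<dots> = (\<integral>\<^sup>+p. \<Phi> (Complex (fst p) (snd p)) \<partial>(D \<Otimes>\<^sub>M D))"
      by (simp add: jd)
    also have "\<dots> = (\<integral>\<^sup>+a. \<integral>\<^sup>+b. \<Phi> (Complex a b) \<partial>D \<partial>D)"
      by (subst DD.nn_integral_fst[symmetric]) auto
    also have "\<dots> = (\<integral>\<^sup>+a. (\<integral>\<^sup>+b. \<Phi> (Complex a b) * ennreal (nd (chi/2) b) \<partial>lborel) * ennreal (nd (chi/2) a) \<partial>lborel)"
      unfolding D_def
      by (subst nn_integral_density, measurable, subst nn_integral_density) (auto simp: mult_ac)
    also have "\<dots> = I2 (\<lambda>z. \<Phi> z * ennreal (nd (chi/2) (Re z)) * ennreal (nd (chi/2) (Im z)))"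
      by (subst I2_split) auto
    finally show "(\<integral>\<^sup>+\<omega>. \<Phi> (X \<omega>) \<partial>M) = I2 (\<lambda>z. \<Phi> z * ennreal (nd (chi/2) (Re z)) * ennreal (nd (chi/2) (Im z)))" .
  qed
qed

lemma indep_vars_sum_c:
  fixes X :: "'i \<Rightarrow> 'a \<Rightarrow> complex"
  assumes P: "prob_space M"
  assumes I: "finite I" "i \<notin> I" and indep: "prob_space.indep_vars M (\<lambda>_. borel) X (insert i I)"
  shows "prob_space.indep_var M borel (X i) borel (\<lambda>\<omega>. \<Sum>i\<in>I. X i \<omega>)"
proof -
  interpret prob_space M by fact
  have "indep_var
    borel ((\<lambda>f. f i) \<circ> (\<lambda>\<omega>. restrict (\<lambda>i. X i \<omega>) {i}))
    borel ((\<lambda>f. \<Sum>i\<in>I. f i) \<circ> (\<lambda>\<omega>. restrict (\<lambda>i. X i \<omega>) I))"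
    using I by (intro indep_var_compose[OF indep_var_restrict[OF indep]] ) auto
  also have "((\<lambda>f. f i) \<circ> (\<lambda>\<omega>. restrict (\<lambda>i. X i \<omega>) {i})) = X i"
    by auto
  also have "((\<lambda>f. \<Sum>i\<in>I. f i) \<circ> (\<lambda>\<omega>. restrict (\<lambda>i. X i \<omega>) I)) = (\<lambda>\<omega>. \<Sum>i\<in>I. X i \<omega>)"
    by (auto cong: rev_conj_cong)
  finally show ?thesis .
qed

lemma sq_subst_pos:
  fixes \<Psi> :: "real \<Rightarrow> real"
  assumes [measurable]: "\<Psi> \<in> borel_measurable borel" and k: "k > 0" and nn: "\<And>x. 0 \<le> \<Psi> x"
  shows "(\<integral>\<^sup>+a. ennreal (2 * k * a * \<Psi> (k * a\<^sup>2) * indicator {0..} a) \<partial>lborel)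
       = (\<integral>\<^sup>+r. ennreal (\<Psi> r * indicator {0..} r) \<partial>lborel)"
proof -
  define f where "f = (\<lambda>n a. ennreal (2 * k * a * \<Psi> (k * a\<^sup>2) * indicator {0..real n} a))"
  define g where "g = (\<lambda>n r. ennreal (\<Psi> r * indicator {0..k * (real n)\<^sup>2} r))"
  have eq: "integral\<^sup>N lborel (f n) = integral\<^sup>N lborel (g n)" for n
  proof -
    have "integral\<^sup>N lborel (g n) = (\<integral>\<^sup>+r. ennreal (\<Psi> r * indicator {(\<lambda>a. k * a\<^sup>2) 0..(\<lambda>a. k * a\<^sup>2) (real n)} r) \<partial>lborel)"
      by (simp add: g_def)
    also have "\<dots> = (\<integral>\<^sup>+a. ennreal (\<Psi> (k * a\<^sup>2) * (2 * k * a) * indicator {0..real n} a) \<partial>lborel)"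
      by (rule nn_integral_substitution[where g' = "\<lambda>a. 2 * k * a"])
         (auto intro!: derivative_eq_intros continuous_intros simp: set_borel_measurable_def k less_imp_le)
    also have "\<dots> = integral\<^sup>N lborel (f n)"
      by (simp add: f_def mult_ac)
    finally show ?thesis ..
  qed
  have mf[measurable]: "f n \<in> borel_measurable lborel" for n unfolding f_def by measurable
  have mg[measurable]: "g n \<in> borel_measurable lborel" for n unfolding g_def by measurable
  have incf: "incseq f"
    unfolding f_def incseq_def le_fun_def using k nn
    by (auto intro!: ennreal_leI mult_left_mono simp: indicator_def)
  have incg: "incseq g"
  proof -
    have mn: "k * (real m)\<^sup>2 \<le> k * (real n)\<^sup>2" if "m \<le> n" for m n
      using that k by (auto intro!: mult_left_mono power_mono)
    show ?thesis
      unfolding g_def incseq_def le_fun_def using k nn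
      by (auto intro!: ennreal_leI mult_left_mono simp: indicator_def)
         (meson mn order_trans)
  qed
  have limf: "(\<lambda>n. f n a) \<longlonglongrightarrow> ennreal (2 * k * a * \<Psi> (k * a\<^sup>2) * indicator {0..} a)" for a
  proof (rule tendsto_eventually)
    obtain N :: nat where "a \<le> real N" using real_arch_simple by blast
    then show "\<forall>\<^sub>F n in sequentially. f n a = ennreal (2 * k * a * \<Psi> (k * a\<^sup>2) * indicator {0..} a)"
      unfolding eventually_sequentially f_def
      by (intro exI[of _ N]) (auto simp: indicator_def)
  qed
  have limg: "(\<lambda>n. g n r) \<longlonglongrightarrow> ennreal (\<Psi> r * indicator {0..} r)" for r
  proof (rule tendsto_eventually)
    obtain N :: nat where N: "max 1 (r / k) \<le> real N" using real_arch_simple by blast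
    have "r \<le> k * (real n)\<^sup>2" if "N \<le> n" for n
    proof -
      have n1: "1 \<le> real n" "r / k \<le> real n" using N that by auto
      have "r \<le> k * real n" using n1 k by (simp add: field_simps)
      also have "\<dots> \<le> k * (real n)\<^sup>2" using n1 k by (simp add: power2_eq_square)
      finally show ?thesis .
    qed
    then show "\<forall>\<^sub>F n in sequentially. g n r = ennreal (\<Psi> r * indicator {0..} r)"
      unfolding eventually_sequentially g_def
      by (intro exI[of _ N]) (auto simp: indicator_def)
  qed
  have "(\<lambda>n. integral\<^sup>N lborel (f n)) \<longlonglongrightarrow> (\<integral>\<^sup>+a. ennreal (2 * k * a * \<Psi> (k * a\<^sup>2) * indicator {0..} a) \<partial>lborel)"
    by (rule nn_integral_LIMSEQ[OF incf mf limf])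
  moreover have "(\<lambda>n. integral\<^sup>N lborel (f n)) \<longlonglongrightarrow> (\<integral>\<^sup>+r. ennreal (\<Psi> r * indicator {0..} r) \<partial>lborel)"
    unfolding eq by (rule nn_integral_LIMSEQ[OF incg mg limg])
  ultimately show ?thesis by (rule LIMSEQ_unique)
qed

lemma sqk:
  fixes \<Psi> :: "real \<Rightarrow> real"
  assumes [measurable]: "\<Psi> \<in> borel_measurable borel" and k: "k > 0" and nn: "\<And>x. 0 \<le> \<Psi> x"
  shows "(\<integral>\<^sup>+a. ennreal (\<bar>a\<bar> * \<Psi> (k * a\<^sup>2)) \<partial>lborel)
       = ennreal (1 / k) * (\<integral>\<^sup>+r. ennreal (\<Psi> r * indicator {0..} r) \<partial>lborel)"
proof -
  define P where "P = (\<integral>\<^sup>+a. ennreal (a * \<Psi> (k * a\<^sup>2) * indicator {0..} a) \<partial>lborel)"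
  have pw: "ennreal (\<bar>a\<bar> * \<Psi> (k * a\<^sup>2)) = ennreal (a * \<Psi> (k * a\<^sup>2) * indicator {0..} a)
      + ennreal ((- a) * \<Psi> (k * (- a)\<^sup>2) * indicator {0..} (- a))" for a
    using nn[of "k * a\<^sup>2"] by (cases "a > 0"; cases "a = 0") (auto simp: indicator_def)
  have "(\<integral>\<^sup>+a. ennreal (\<bar>a\<bar> * \<Psi> (k * a\<^sup>2)) \<partial>lborel) =
        P + (\<integral>\<^sup>+a. ennreal ((- a) * \<Psi> (k * (- a)\<^sup>2) * indicator {0..} (- a)) \<partial>lborel)"
    unfolding pw P_def by (rule nn_integral_add) auto
  also have "(\<integral>\<^sup>+a. ennreal ((- a) * \<Psi> (k * (- a)\<^sup>2) * indicator {0..} (- a)) \<partial>lborel) = P"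
    unfolding P_def
    using nn_integral_real_affine[of "\<lambda>a. ennreal (a * \<Psi> (k * a\<^sup>2) * indicator {0..} a)" "-1" 0] by simp
  finally have 1: "(\<integral>\<^sup>+a. ennreal (\<bar>a\<bar> * \<Psi> (k * a\<^sup>2)) \<partial>lborel) = P + P" .
  have "(\<integral>\<^sup>+r. ennreal (\<Psi> r * indicator {0..} r) \<partial>lborel) =
        (\<integral>\<^sup>+a. ennreal (2 * k * a * \<Psi> (k * a\<^sup>2) * indicator {0..} a) \<partial>lborel)"
    using sq_subst_pos[of \<Psi> k, OF _ k nn] by simp
  also have "\<dots> = (\<integral>\<^sup>+a. ennreal (2 * k) * ennreal (a * \<Psi> (k * a\<^sup>2) * indicator {0..} a) \<partial>lborel)"
  proof -
    have "ennreal (2 * k * a * \<Psi> (k * a\<^sup>2) * indicator {0..} a) = ennreal (2 * k) * ennreal (a * \<Psi> (k * a\<^sup>2) * indicator {0..} a)" for a :: real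
      using k by (subst ennreal_mult'[symmetric]) (simp_all add: mult_ac)
    then show ?thesis by simp
  qed
  also have "\<dots> = ennreal (2 * k) * P"
    unfolding P_def by (rule nn_integral_cmult) measurable
  finally have 2: "(\<integral>\<^sup>+r. ennreal (\<Psi> r * indicator {0..} r) \<partial>lborel) = ennreal (2 * k) * P" .
  have "ennreal (1 / k) * (ennreal (2 * k) * P) = (ennreal (1 / k) * ennreal (2 * k)) * P"
    by (simp only: mult.assoc)
  also have "ennreal (1 / k) * ennreal (2 * k) = ennreal (1 / k * (2 * k))"
    using k by (subst ennreal_mult'[symmetric]) auto
  also have "1 / k * (2 * k) = 2" using k by simp
  also have "ennreal 2 * P = P + P" by (simp add: mult_2)
  finally show ?thesis using 1 2 by simp
qed

lemma nn_integral_inverse_1_plus_square: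
  "(\<integral>\<^sup>+t. ennreal (1 / (1 + (t::real)\<^sup>2)) \<partial>lborel) = ennreal pi"
proof -
  have i: "integrable lborel (\<lambda>t::real. inverse (1 + t\<^sup>2))"
    using integrable_inverse_1_plus_square unfolding set_integrable_def einterval_def by simp
  have "(LBINT t::real. inverse (1 + t\<^sup>2)) = pi"
    using LBINT_inverse_1_plus_square
    by (simp add: interval_lebesgue_integral_def set_lebesgue_integral_def einterval_def)
  moreover have "(\<integral>\<^sup>+t. ennreal (inverse (1 + t\<^sup>2)) \<partial>lborel) = ennreal (LBINT t::real. inverse (1 + t\<^sup>2))"
    by (rule nn_integral_eq_integral[OF i]) (auto simp: add_pos_nonneg)
  ultimately show ?thesis by (simp add: inverse_eq_divide)
qed

lemma radial:
  fixes \<Psi> :: "real \<Rightarrow> real"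
  assumes [measurable]: "\<Psi> \<in> borel_measurable borel" and nn: "\<And>x. 0 \<le> \<Psi> x"
  shows "(\<integral>\<^sup>+a. \<integral>\<^sup>+b. ennreal (\<Psi> (a\<^sup>2 + b\<^sup>2)) \<partial>lborel \<partial>lborel)
       = ennreal pi * (\<integral>\<^sup>+r. ennreal (\<Psi> r * indicator {0..} r) \<partial>lborel)"
proof -
  define J where "J = (\<integral>\<^sup>+r. ennreal (\<Psi> r * indicator {0..} r) \<partial>lborel)"
  have "(\<integral>\<^sup>+a. \<integral>\<^sup>+b. ennreal (\<Psi> (a\<^sup>2 + b\<^sup>2)) \<partial>lborel \<partial>lborel)
      = (\<integral>\<^sup>+a. \<integral>\<^sup>+t. ennreal (\<bar>a\<bar> * \<Psi> ((1 + t\<^sup>2) * a\<^sup>2)) \<partial>lborel \<partial>lborel)"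
  proof (rule nn_integral_cong_AE)
    show "AE a in lborel. (\<integral>\<^sup>+b. ennreal (\<Psi> (a\<^sup>2 + b\<^sup>2)) \<partial>lborel) = (\<integral>\<^sup>+t. ennreal (\<bar>a\<bar> * \<Psi> ((1 + t\<^sup>2) * a\<^sup>2)) \<partial>lborel)"
      using AE_lborel_singleton[of 0]
    proof eventually_elim
      case (elim a)
      have "(\<integral>\<^sup>+b. ennreal (\<Psi> (a\<^sup>2 + b\<^sup>2)) \<partial>lborel) = ennreal \<bar>a\<bar> * (\<integral>\<^sup>+t. ennreal (\<Psi> (a\<^sup>2 + (a * t)\<^sup>2)) \<partial>lborel)"
        using nn_integral_real_affine[of "\<lambda>b. ennreal (\<Psi> (a\<^sup>2 + b\<^sup>2))" a 0] elim by simp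
      also have "\<dots> = (\<integral>\<^sup>+t. ennreal (\<bar>a\<bar> * \<Psi> ((1 + t\<^sup>2) * a\<^sup>2)) \<partial>lborel)"
        by (subst nn_integral_cmult[symmetric]) (auto simp: ennreal_mult' algebra_simps power_mult_distrib)
      finally show ?case .
    qed
  qed
  also have "\<dots> = (\<integral>\<^sup>+t. \<integral>\<^sup>+a. ennreal (\<bar>a\<bar> * \<Psi> ((1 + t\<^sup>2) * a\<^sup>2)) \<partial>lborel \<partial>lborel)"
    by (rule lborel_pair.Fubini'[symmetric]) measurable
  also have "\<dots> = (\<integral>\<^sup>+t. ennreal (1 / (1 + t\<^sup>2)) * J \<partial>lborel)"
  proof -
    have "(\<integral>\<^sup>+a. ennreal (\<bar>a\<bar> * \<Psi> ((1 + t\<^sup>2) * a\<^sup>2)) \<partial>lborel) = ennreal (1 / (1 + t\<^sup>2)) * J" for t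
      unfolding J_def by (rule sqk) (auto simp: nn add_pos_nonneg)
    then show ?thesis by simp
  qed
  also have "\<dots> = ennreal pi * J"
    by (subst nn_integral_multc) (auto simp: nn_integral_inverse_1_plus_square)
  finally show ?thesis unfolding J_def .
qed

definition gg :: "real \<Rightarrow> real" where "gg x = ln (1 + x) - x / (x + 1)"

lemma gg_strict_mono:
  assumes "0 \<le> x" "x < y" shows "gg x < gg y"
proof (rule DERIV_pos_imp_increasing_open[OF assms(2)])
  fix z assume z: "x < z" "z < y"
  then have z0: "z > 0" using assms by simp
  have "DERIV gg z :> (1 / (1 + z) - ((z + 1) - z) / (z + 1)\<^sup>2)"
    unfolding gg_def[abs_def] using z0
    by (auto intro!: derivative_eq_intros simp: power2_eq_square field_simps)
  moreover have "1 / (1 + z) - ((z + 1) - z) / (z + 1)\<^sup>2 = z / (z + 1)\<^sup>2"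
  proof -
    have "1 / (1 + z) = (z + 1) / (z + 1)\<^sup>2" using z0 by (simp add: power2_eq_square add.commute)
    then show ?thesis by (simp add: diff_divide_distrib[symmetric])
  qed
  moreover have "z / (z + 1)\<^sup>2 > 0" using z0 by simp
  ultimately show "\<exists>d. DERIV gg z :> d \<and> d > 0" by auto
next
  show "continuous_on {x..y} gg"
    unfolding gg_def[abs_def] using assms
    by (intro continuous_intros) (auto simp: add_pos_nonneg)
qed

lemma gg_0[simp]: "gg 0 = 0" by (simp add: gg_def)

lemma gg_nonneg: "0 \<le> x \<Longrightarrow> 0 \<le> gg x"
  using gg_strict_mono[of 0 x] by (cases "x = 0") auto

lemma gg_mono: "0 \<le> x \<Longrightarrow> x \<le> y \<Longrightarrow> gg x \<le> gg y"
  using gg_strict_mono[of x y] by (cases "x = y") auto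

lemma gg_meas[measurable]: "gg \<in> borel_measurable borel"
  unfolding gg_def[abs_def] by measurable

lemma lim1: "t > 0 \<Longrightarrow> ((\<lambda>w::real. - exp (- w) * ln (t * w)) \<longlongrightarrow> 0) at_top"
  by real_asymp

lemma lim2: "((\<lambda>w::real. - ((w + 1) * exp (- w))) \<longlongrightarrow> 0) at_top"
  by real_asymp

lemma lim3: "((\<lambda>w::real. - exp (- w)) \<longlongrightarrow> 0) at_top"
  by real_asymp

lemma ilt: "interval_lebesgue_integrable lborel (ereal a) \<infinity> f \<longleftrightarrow> set_integrable lborel (einterval (ereal a) \<infinity>) f"
  by (simp add: interval_lebesgue_integrable_def)

lemma einterval_PInf: "einterval (ereal a) \<infinity> = {a<..}"
  by (auto simp: einterval_def)

lemma FTC_nn_Ioi: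
  fixes f F :: "real \<Rightarrow> real"
  assumes F: "\<And>x. a < x \<Longrightarrow> DERIV F x :> f x"
  assumes f: "\<And>x. a < x \<Longrightarrow> isCont f x"
  assumes nn: "\<And>x. a < x \<Longrightarrow> 0 \<le> f x"
  assumes A: "(F \<longlongrightarrow> A) (at_right a)" and B: "(F \<longlongrightarrow> B) at_top"
  shows "interval_lebesgue_integrable lborel (ereal a) \<infinity> f" "(LBINT x = ereal a..\<infinity>. f x) = B - A"
proof -
  have A': "((F \<circ> real_of_ereal) \<longlongrightarrow> A) (at_right (ereal a))" using A by (simp add: ereal_tendsto_simps1)
  have B': "((F \<circ> real_of_ereal) \<longlongrightarrow> B) (at_left \<infinity>)" using B by (simp add: ereal_tendsto_simps1)
  show "interval_lebesgue_integrable lborel (ereal a) \<infinity> f"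
    unfolding ilt by (rule interval_integral_FTC_nonneg(1)[OF _ _ _ _ A' B']) (auto intro: F f nn)
  show "(LBINT x = ereal a..\<infinity>. f x) = B - A"
    by (rule interval_integral_FTC_nonneg(2)[OF _ _ _ _ A' B']) (auto intro: F f nn)
qed

lemma FTC_int_Ioi:
  fixes f F :: "real \<Rightarrow> real"
  assumes F: "\<And>x. a < x \<Longrightarrow> DERIV F x :> f x"
  assumes f: "\<And>x. a < x \<Longrightarrow> isCont f x"
  assumes i: "interval_lebesgue_integrable lborel (ereal a) \<infinity> f"
  assumes A: "(F \<longlongrightarrow> A) (at_right a)" and B: "(F \<longlongrightarrow> B) at_top"
  shows "(LBINT x = ereal a..\<infinity>. f x) = B - A"
proof -
  have A': "((F \<circ> real_of_ereal) \<longlongrightarrow> A) (at_right (ereal a))" using A by (simp add: ereal_tendsto_simps1)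
  have B': "((F \<circ> real_of_ereal) \<longlongrightarrow> B) (at_left \<infinity>)" using B by (simp add: ereal_tendsto_simps1)
  show ?thesis
    by (rule interval_integral_FTC_integrable[OF _ _ _ _ A' B'])
       (use i in \<open>auto intro: F f simp: ilt has_real_derivative_iff_has_vector_derivative[symmetric]\<close>)
qed

lemma I_exp:
  shows "interval_lebesgue_integrable lborel (ereal a) \<infinity> (\<lambda>w. exp (- w))"
    and "(LBINT w = ereal a..\<infinity>. exp (- w)) = exp (- a)"
proof -
  have l1: "((\<lambda>w. - exp (- w)) \<longlongrightarrow> - exp (- a)) (at_right a)" by (intro tendsto_intros)
  note r = FTC_nn_Ioi[where F="\<lambda>w. - exp (- w)", OF _ _ _ l1 lim3]
  show "interval_lebesgue_integrable lborel (ereal a) \<infinity> (\<lambda>w. exp (- w))"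
    by (rule r(1)) (auto intro!: derivative_eq_intros)
  show "(LBINT w = ereal a..\<infinity>. exp (- w)) = exp (- a)"
    by (subst r(2)) (auto intro!: derivative_eq_intros)
qed

lemma I_wexp:
  assumes "a \<ge> 0"
  shows "interval_lebesgue_integrable lborel (ereal a) \<infinity> (\<lambda>w. w * exp (- w))"
proof -
  have l1: "((\<lambda>w. - ((w + 1) * exp (- w))) \<longlongrightarrow> - ((a + 1) * exp (- a))) (at_right a)" by (intro tendsto_intros)
  note r = FTC_nn_Ioi[where F="\<lambda>w. - ((w + 1) * exp (- w))", OF _ _ _ l1 lim2]
  show ?thesis
    by (rule r(1)) (use assms in \<open>auto intro!: derivative_eq_intros simp: algebra_simps\<close>)
qed

lemma sbm:
  fixes f :: "real \<Rightarrow> real"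
  assumes [measurable]: "f \<in> borel_measurable borel"
  shows "set_borel_measurable lborel (einterval (ereal a) \<infinity>) f"
proof -
  have e: "(\<lambda>x. indicator {a<..} x *\<^sub>R f x) = (\<lambda>x. if a < x then f x else 0)"
    by (auto simp: indicator_def fun_eq_iff)
  show ?thesis
    unfolding set_borel_measurable_def einterval_PInf e by measurable
qed

lemma I_inv:
  assumes a: "a > 0"
  shows "interval_lebesgue_integrable lborel (ereal a) \<infinity> (\<lambda>w. exp (- w) / w)"
  unfolding ilt
proof (rule set_integrable_bound)
  show "set_integrable lborel (einterval (ereal a) \<infinity>) (\<lambda>w. exp (- w) / a)"
    using I_exp(1)[of a] a unfolding ilt[symmetric] by auto
  show "set_borel_measurable lborel (einterval (ereal a) \<infinity>) (\<lambda>w. exp (- w) / w)"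
    by (rule sbm) measurable
  show "AE x in lborel. x \<in> einterval (ereal a) \<infinity> \<longrightarrow> norm (exp (- x) / x) \<le> norm (exp (- x) / a)"
    using a by (auto simp: einterval_PInf intro!: divide_left_mono)
qed

lemma I_expln:
  assumes t: "t > 0"
  shows "interval_lebesgue_integrable lborel (ereal (1/t)) \<infinity> (\<lambda>w. exp (- w) * ln (t * w))"
  unfolding ilt
proof (rule set_integrable_bound)
  show "set_integrable lborel (einterval (ereal (1/t)) \<infinity>) (\<lambda>w. t * (w * exp (- w)))"
    using I_wexp[of "1/t"] t unfolding ilt[symmetric] by auto
  show "set_borel_measurable lborel (einterval (ereal (1/t)) \<infinity>) (\<lambda>w. exp (- w) * ln (t * w))"
    by (rule sbm) measurable
  show "AE x in lborel. x \<in> einterval (ereal (1/t)) \<infinity> \<longrightarrow> norm (exp (- x) * ln (t * x)) \<le> norm (t * (x * exp (- x)))"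
  proof (rule AE_I2, rule impI)
    fix x assume "x \<in> einterval (ereal (1/t)) \<infinity>"
    then have x: "1 / t < x" by (simp add: einterval_PInf)
    then have tx: "1 < t * x" using t by (simp add: field_simps)
    have l0: "0 \<le> ln (t * x)" using tx by simp
    have l1: "ln (t * x) \<le> t * x" using ln_le_minus_one[of "t*x"] tx by linarith
    have x0: "x > 0" using less_trans[OF divide_pos_pos[OF zero_less_one t] x] .
    show "norm (exp (- x) * ln (t * x)) \<le> norm (t * (x * exp (- x)))"
      using l0 l1 t x0 by (simp add: abs_mult mult_right_mono mult.commute mult.left_commute)
  qed
qed

definition Fn :: "real \<Rightarrow> ennreal" where
  "Fn t = (\<integral>\<^sup>+y. ennreal (gg (t * y) * exp (- y) * indicator {0..} y) \<partial>lborel)"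

definition fr :: "real \<Rightarrow> real" where
  "fr t = (1 + 1 / t) * exp (1 / t) * E1 (1 / t) - 1"

lemma Fn_eq:
  assumes t: "t > 0"
  shows "Fn t = ennreal (fr t)"
proof -
  define a where "a = 1 / t"
  have a: "a > 0" using t by (simp add: a_def)
  have ta: "t * a = 1" using t by (simp add: a_def)
  define k1 where "k1 = (\<lambda>w. exp (- w) * ln (t * w) - exp (- w) / w)"
  define K where "K = (\<lambda>w. exp a * (k1 w + (1 + a) * (exp (- w) / w) - exp (- w)))"
  have i1: "interval_lebesgue_integrable lborel (ereal a) \<infinity> (\<lambda>w. exp (- w) * ln (t * w))"
    using I_expln[OF t] by (simp add: a_def)
  have i2: "interval_lebesgue_integrable lborel (ereal a) \<infinity> (\<lambda>w. exp (- w) / w)"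
    using I_inv[OF a] .
  have i3: "interval_lebesgue_integrable lborel (ereal a) \<infinity> (\<lambda>w. exp (- w))"
    using I_exp(1) .
  have ik1: "interval_lebesgue_integrable lborel (ereal a) \<infinity> k1"
    unfolding k1_def using i1 i2 by (rule interval_lebesgue_integral_diff(1))
  have i4: "interval_lebesgue_integrable lborel (ereal a) \<infinity> (\<lambda>w. (1 + a) * (exp (- w) / w))"
    using i2 by (rule interval_lebesgue_integrable_mult_right)
  have i5: "interval_lebesgue_integrable lborel (ereal a) \<infinity> (\<lambda>w. k1 w + (1 + a) * (exp (- w) / w))"
    using ik1 i4 by (rule interval_lebesgue_integral_add(1))
  have i6: "interval_lebesgue_integrable lborel (ereal a) \<infinity> (\<lambda>w. k1 w + (1 + a) * (exp (- w) / w) - exp (- w))"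
    using i5 i3 by (rule interval_lebesgue_integral_diff(1))
  have iK: "interval_lebesgue_integrable lborel (ereal a) \<infinity> K"
    unfolding K_def using i6 by (rule interval_lebesgue_integrable_mult_right)
  have Lk1: "(LBINT w = ereal a..\<infinity>. k1 w) = 0"
  proof -
    have "(LBINT w = ereal a..\<infinity>. k1 w) = 0 - 0"
    proof (rule FTC_int_Ioi[where F="\<lambda>w. - exp (- w) * ln (t * w)"])
      fix x assume x: "a < x"
      then have x0: "x > 0" using a by simp
      show "DERIV (\<lambda>w. - exp (- w) * ln (t * w)) x :> k1 x"
        unfolding k1_def using x0 t
        by (auto intro!: derivative_eq_intros simp: field_simps)
      show "isCont k1 x" unfolding k1_def using x0 t
        by (intro continuous_intros) auto
    next
      show "interval_lebesgue_integrable lborel (ereal a) \<infinity> k1" by (rule ik1)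
      have "((\<lambda>w. - exp (- w) * ln (t * w)) \<longlongrightarrow> - exp (- a) * ln (t * a)) (at_right a)"
        using ta by (intro tendsto_intros) auto
      then show "((\<lambda>w. - exp (- w) * ln (t * w)) \<longlongrightarrow> 0) (at_right a)" using ta by simp
      show "((\<lambda>w. - exp (- w) * ln (t * w)) \<longlongrightarrow> 0) at_top" using lim1[OF t] .
    qed
    then show ?thesis by simp
  qed
  have LK: "(LBINT w = ereal a..\<infinity>. K w) = fr t"
  proof -
    have "(LBINT w = ereal a..\<infinity>. K w) = exp a * ((LBINT w = ereal a..\<infinity>. k1 w) + (1 + a) * (LBINT w = ereal a..\<infinity>. exp (- w) / w) - (LBINT w = ereal a..\<infinity>. exp (- w)))"
      unfolding K_def
      by (simp only: interval_lebesgue_integral_mult_right interval_lebesgue_integral_diff(2)[OF i5 i3]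
            interval_lebesgue_integral_add(2)[OF ik1 i4])
    also have "\<dots> = exp a * ((1 + a) * E1 a - exp (- a))"
      by (simp add: Lk1 I_exp(2) E1_def)
    also have "\<dots> = fr t"
      by (simp add: fr_def a_def algebra_simps exp_minus field_simps)
    finally show ?thesis .
  qed
  have pe: "gg (t * (- a + w)) * exp (- (- a + w)) * indicator {0..} (- a + w) = indicator (einterval (ereal a) \<infinity>) w * K w" for w
  proof (cases "a < w")
    case True
    then have w0: "w > 0" using a by simp
    have tw: "t * w > 0" using t w0 by simp
    have g: "gg (t * (- a + w)) = ln (t * w) - 1 + a / w"
    proof -
      have e1: "1 + t * (- a + w) = t * w" using ta by (simp add: algebra_simps)
      have e2: "t * (- a + w) + 1 = t * w" using ta by (simp add: algebra_simps)
      have e3a: "t * (- a + w) = t * w - 1" using ta by (simp add: algebra_simps)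
      have e3b: "1 / (t * w) = a / w" by (simp add: a_def)
      have e3: "t * (- a + w) / (t * w) = 1 - a / w"
        unfolding e3a using tw t w0 by (simp add: diff_divide_distrib e3b[symmetric])
      show ?thesis unfolding gg_def e1 e2 e3 by simp
    qed
    have ex: "exp (- (- a + w)) = exp a * exp (- w)" by (simp add: exp_add[symmetric])
    have "K w = exp a * exp (- w) * (ln (t * w) - 1 + a / w)"
      unfolding K_def k1_def by (simp add: algebra_simps add_divide_distrib diff_divide_distrib)
    then show ?thesis using True g ex by (simp add: einterval_PInf indicator_def mult_ac)
  next
    case False
    then show ?thesis by (cases "w = a") (auto simp: einterval_PInf indicator_def)
  qed
  have "Fn t = (\<integral>\<^sup>+w. ennreal (gg (t * (- a + w)) * exp (- (- a + w)) * indicator {0..} (- a + w)) \<partial>lborel)"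
    unfolding Fn_def
    using nn_integral_real_affine[of "\<lambda>y. ennreal (gg (t * y) * exp (- y) * indicator {0..} y)" 1 "- a"]
    by simp
  also have "\<dots> = (\<integral>\<^sup>+w. ennreal (indicator (einterval (ereal a) \<infinity>) w *\<^sub>R K w) \<partial>lborel)"
    unfolding pe by simp
  also have "\<dots> = ennreal (LBINT w. indicator (einterval (ereal a) \<infinity>) w *\<^sub>R K w)"
  proof (rule nn_integral_eq_integral)
    show "integrable lborel (\<lambda>w. indicator (einterval (ereal a) \<infinity>) w *\<^sub>R K w)"
      using iK by (simp add: ilt set_integrable_def)
    show "AE w in lborel. 0 \<le> indicator (einterval (ereal a) \<infinity>) w *\<^sub>R K w"
    proof (rule AE_I2)
      fix w
      have "0 \<le> gg (t * (- a + w)) * exp (- (- a + w)) * indicator {0..} (- a + w)"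
        using t by (cases "0 \<le> - a + w") (auto simp: indicator_def intro!: mult_nonneg_nonneg gg_nonneg)
      then show "0 \<le> indicator (einterval (ereal a) \<infinity>) w *\<^sub>R K w" unfolding pe by simp
    qed
  qed
  also have "(LBINT w. indicator (einterval (ereal a) \<infinity>) w *\<^sub>R K w) = (LBINT w = ereal a..\<infinity>. K w)"
    by (simp add: interval_lebesgue_integral_def set_lebesgue_integral_def)
  finally show ?thesis using LK by simp
qed

lemma not_AE_nonpos: "\<not> (AE y in lborel. (y::real) \<le> 0)"
proof
  assume "AE y in lborel. (y::real) \<le> 0"
  then obtain N where N: "{y. \<not> y \<le> (0::real)} \<subseteq> N" "N \<in> sets lborel" "emeasure lborel N = 0"
    by (auto elim!: AE_E)
  have "{1..2::real} \<subseteq> N" using N(1) by auto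
  then have "emeasure lborel {1..2::real} \<le> emeasure lborel N" using N(2) by (intro emeasure_mono) auto
  then show False using N(3) by simp
qed

lemma Fn_less:
  assumes s: "0 < s" and st: "s < t"
  shows "Fn s < Fn t"
  unfolding Fn_def
proof (rule nn_integral_less)
  have t: "t > 0" using s st by simp
  show "(\<integral>\<^sup>+y. ennreal (gg (s * y) * exp (- y) * indicator {0..} y) \<partial>lborel) \<noteq> \<infinity>"
    using Fn_eq[OF s] unfolding Fn_def by simp
  show "AE y in lborel. ennreal (gg (s * y) * exp (- y) * indicator {0..} y) \<le> ennreal (gg (t * y) * exp (- y) * indicator {0..} y)"
  proof (rule AE_I2)
    fix y :: real
    show "ennreal (gg (s * y) * exp (- y) * indicator {0..} y) \<le> ennreal (gg (t * y) * exp (- y) * indicator {0..} y)"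
    proof (cases "0 \<le> y")
      case True
      have "gg (s * y) \<le> gg (t * y)" using True s st by (intro gg_mono) (auto intro: mult_right_mono)
      then show ?thesis using True by (auto intro!: ennreal_leI simp: indicator_def)
    qed (simp add: indicator_def)
  qed
  show "\<not> (AE y in lborel. ennreal (gg (t * y) * exp (- y) * indicator {0..} y) \<le> ennreal (gg (s * y) * exp (- y) * indicator {0..} y))"
  proof
    assume "AE y in lborel. ennreal (gg (t * y) * exp (- y) * indicator {0..} y) \<le> ennreal (gg (s * y) * exp (- y) * indicator {0..} y)"
    then have "AE y in lborel. (y::real) \<le> 0"
    proof eventually_elim
      case (elim y)
      show "y \<le> 0"
      proof (rule ccontr)
        assume "\<not> y \<le> 0"
        then have y: "y > 0" by simp
        have "gg (s * y) < gg (t * y)" using y s st by (intro gg_strict_mono) auto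
        then have "gg (s * y) * exp (- y) < gg (t * y) * exp (- y)" by simp
        moreover have "0 \<le> gg (s * y) * exp (- y)" using y s by (simp add: gg_nonneg)
        ultimately have "ennreal (gg (s * y) * exp (- y)) < ennreal (gg (t * y) * exp (- y))"
          by (simp add: ennreal_less_iff)
        then show False using elim y by (simp add: indicator_def)
      qed
    qed
    then show False using not_AE_nonpos by simp
  qed
qed (measurable)

lemma fr_pos: "t > 0 \<Longrightarrow> fr t > 0"
proof -
  assume t: "t > 0"
  have "Fn (t/2) < Fn t" using t by (intro Fn_less) auto
  then have "ennreal (fr (t/2)) < ennreal (fr t)" using t by (simp add: Fn_eq)
  then show "fr t > 0" by (cases "fr t \<le> 0") (auto simp: ennreal_neg)
qed

lemma fr_less: "0 < s \<Longrightarrow> s < t \<Longrightarrow> fr s < fr t"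
proof -
  assume st: "0 < s" "s < t"
  have "Fn s < Fn t" using st by (intro Fn_less) auto
  then have "ennreal (fr s) < ennreal (fr t)" using st by (simp add: Fn_eq)
  then show "fr s < fr t" using fr_pos[OF st(1)] by (simp add: ennreal_less_iff)
qed

lemma fr_le_iff: "0 < s \<Longrightarrow> 0 < t \<Longrightarrow> fr s \<le> fr t \<longleftrightarrow> s \<le> t"
  using fr_less[of s t] fr_less[of t s] by (cases "s = t") (auto simp: not_le[symmetric])

lemma Dfun_gg:
  assumes "x \<ge> 0" "sigw2 > 0" "Pa > 0"
  shows "L * (ln (1 + Pa * x / sigw2) - Pa * x / (Pa * x + sigw2)) = L * gg (Pa * x / sigw2)"
proof -
  have "Pa * x / (Pa * x + sigw2) = (Pa * x / sigw2) / (Pa * x / sigw2 + 1)"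
    using assms by (simp add: field_simps)
  then show ?thesis by (simp add: gg_def)
qed

theorem theorem2:
  fixes M :: "'a measure" and N :: nat
    and L eps sigw2 Pa chi_aw chi_rw epsbar :: real
    and h_ar :: "nat \<Rightarrow> complex" and rho theta :: "nat \<Rightarrow> real"
    and h_aw :: "'a \<Rightarrow> complex" and h_rw :: "nat \<Rightarrow> 'a \<Rightarrow> complex"
  assumes "prob_space M"
    and "N \<ge> 1" and "L > 0" and "eps > 0" and "sigw2 > 0" and "Pa > 0"
    and "chi_aw > 0" and "chi_rw > 0"
    and "\<forall>n\<in>{1..N}. rho n \<in> {0..1} \<and> theta n \<in> {0..<2 * pi}"
    and "cgauss M h_aw chi_aw"
    and "\<forall>n\<in>{1..N}. cgauss M (h_rw n) chi_rw"
    and "prob_space.indep_vars M (\<lambda>_. borel) (\<lambda>i. if i = 0 then h_aw else h_rw i) {0..N}"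
    and "epsbar > 0"
    and "(1 + 1 / epsbar) * exp (1 / epsbar) * E1 (1 / epsbar) - 1 - 2 * eps\<^sup>2 / L = 0"
  shows "let X = (\<lambda>\<omega>. (cmod ((\<Sum>n=1..N. cnj (h_rw n \<omega>) * complex_of_real (rho n)
                          * exp (\<i> * complex_of_real (theta n)) * h_ar n) + h_aw \<omega>))\<^sup>2);
             D = (\<lambda>\<omega>. L * (ln (1 + Pa * X \<omega> / sigw2) - Pa * X \<omega> / (Pa * X \<omega> + sigw2)))
         in ((integral\<^sup>L M D \<le> 2 * eps\<^sup>2) \<longleftrightarrow>
             Pa / sigw2 * (chi_rw * (\<Sum>n=1..N. (rho n)\<^sup>2 * (cmod (h_ar n))\<^sup>2) + chi_aw) \<le> epsbar)"
proof -
  note P = assms(1)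
  interpret prob_space M by (rule P)
  have L: "L > 0" and sig: "sigw2 > 0" and Pa: "Pa > 0" and caw: "chi_aw > 0" and crw: "chi_rw > 0"
    and eb: "epsbar > 0" using assms by auto
  define c where "c n = complex_of_real (rho n) * exp (\<i> * complex_of_real (theta n)) * h_ar n" for n
  define T where "T i = (if i = 0 then h_aw else (\<lambda>\<omega>. c i * cnj (h_rw i \<omega>)))" for i
  have indT: "indep_vars (\<lambda>_. borel) T {0..N}"
  proof -
    have "indep_vars (\<lambda>_. borel) (\<lambda>i x. (if i = 0 then (\<lambda>z. z) else (\<lambda>z. c i * cnj z)) ((\<lambda>i. if i = 0 then h_aw else h_rw i) i x)) {0..N}"
      by (rule indep_vars_compose2[OF assms(12)]) auto
    moreover have "(\<lambda>i x. (if i = 0 then (\<lambda>z. z) else (\<lambda>z. c i * cnj z)) ((\<lambda>i. if i = 0 then h_aw else h_rw i) i x)) = T"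
      by (auto simp: T_def fun_eq_iff)
    ultimately show ?thesis by simp
  qed
  have CNaw: "CN M (T 0) (chi_aw / 2)"
    unfolding T_def using cgauss_CN[OF P assms(10) caw] by simp
  have CNi: "CN M (T i) ((cmod (c i))\<^sup>2 * (chi_rw / 2))" if "i \<in> {1..N}" "c i \<noteq> 0" for i
  proof -
    have "CN M (h_rw i) (chi_rw / 2)" using cgauss_CN[OF P _ crw] assms(11) that(1) by auto
    then have "CN M (\<lambda>\<omega>. c i * cnj (h_rw i \<omega>)) ((cmod (c i))\<^sup>2 * (chi_rw / 2))"
      by (intro CN_scale CN_cnj that(2))
    then show ?thesis using that(1) by (simp add: T_def)
  qed
  have mainJ: "CN M (\<lambda>\<omega>. T 0 \<omega> + (\<Sum>j\<in>J. T j \<omega>)) (chi_aw / 2 + (\<Sum>j\<in>J. (cmod (c j))\<^sup>2 * (chi_rw / 2)))"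
    if "J \<subseteq> {1..N}" for J
  proof -
    have "finite J" using that finite_subset by blast
    then show ?thesis using that
    proof (induction J rule: finite_induct)
      case empty
      then show ?case using CNaw by simp
    next
      case (insert i J)
      have iN: "i \<in> {1..N}" and JN: "J \<subseteq> {1..N}" using insert.prems by auto
      have i0: "i \<noteq> 0" using iN by auto
      have J0: "0 \<notin> J" using JN by auto
      have IH: "CN M (\<lambda>\<omega>. T 0 \<omega> + (\<Sum>j\<in>J. T j \<omega>)) (chi_aw / 2 + (\<Sum>j\<in>J. (cmod (c j))\<^sup>2 * (chi_rw / 2)))"
        using insert.IH JN by simp
      have "indep_vars (\<lambda>_. borel) T (insert i (insert 0 J))"
        by (rule indep_vars_subset[OF indT]) (use iN JN in auto)
      then have ind0: "indep_var borel (T i) borel (\<lambda>\<omega>. \<Sum>j\<in>insert 0 J. T j \<omega>)"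
        using indep_vars_sum_c[OF P, of "insert 0 J" i T] insert.hyps i0 by auto
      have eqS: "(\<lambda>\<omega>. \<Sum>j\<in>insert 0 J. T j \<omega>) = (\<lambda>\<omega>. T 0 \<omega> + (\<Sum>j\<in>J. T j \<omega>))"
        using insert.hyps J0 by (simp add: sum.insert)
      show ?case
      proof (cases "c i = 0")
        case True
        have "T i = (\<lambda>\<omega>. 0)" using True i0 by (simp add: T_def fun_eq_iff)
        then show ?thesis using IH insert.hyps True by (simp add: sum.insert)
      next
        case False
        have "CN M (\<lambda>\<omega>. T i \<omega> + (T 0 \<omega> + (\<Sum>j\<in>J. T j \<omega>)))
                ((cmod (c i))\<^sup>2 * (chi_rw / 2) + (chi_aw / 2 + (\<Sum>j\<in>J. (cmod (c j))\<^sup>2 * (chi_rw / 2))))"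
          by (rule CN_add[OF P CNi[OF iN False] IH]) (use ind0 eqS in simp)
        then show ?thesis using insert.hyps by (simp add: sum.insert algebra_simps)
      qed
    qed
  qed
  define lam where "lam = chi_rw * (\<Sum>n=1..N. (rho n)\<^sup>2 * (cmod (h_ar n))\<^sup>2) + chi_aw"
  have lam: "lam > 0" unfolding lam_def using crw caw by (intro add_nonneg_pos sum_nonneg mult_nonneg_nonneg) auto
  define Z where "Z = (\<lambda>\<omega>. (\<Sum>n=1..N. cnj (h_rw n \<omega>) * complex_of_real (rho n)
                          * exp (\<i> * complex_of_real (theta n)) * h_ar n) + h_aw \<omega>)"
  have CNZ: "CN M Z (lam / 2)"
  proof -
    have c1: "CN M (\<lambda>\<omega>. T 0 \<omega> + (\<Sum>j\<in>{1..N}. T j \<omega>)) (chi_aw / 2 + (\<Sum>j\<in>{1..N}. (cmod (c j))\<^sup>2 * (chi_rw / 2)))"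
      by (rule mainJ) simp
    have c2: "(\<lambda>\<omega>. T 0 \<omega> + (\<Sum>j\<in>{1..N}. T j \<omega>)) = Z"
      unfolding Z_def T_def c_def by (auto simp: fun_eq_iff mult_ac intro!: sum.cong)
    have c3: "chi_aw / 2 + (\<Sum>j\<in>{1..N}. (cmod (c j))\<^sup>2 * (chi_rw / 2)) = lam / 2"
      unfolding lam_def c_def
      by (simp add: norm_mult power_mult_distrib sum_distrib_left sum_distrib_right sum_divide_distrib[symmetric] mult_ac
            add_divide_distrib)
    show ?thesis using c1 by (simp only: c2 c3)
  qed
  have Zm[measurable]: "Z \<in> borel_measurable M" using CNZ by (simp add: CN_def)
  define s where "s = Pa / sigw2 * lam"
  have s: "s > 0" unfolding s_def using Pa sig lam by simp
  define v where "v = lam / 2"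
  have v: "v > 0" using lam by (simp add: v_def)
  define \<Psi> where "\<Psi> r = L * gg (Pa * max r 0 / sigw2) * (exp (- r / (2 * v)) / (2 * pi * v))" for r
  have \<Psi>nn: "0 \<le> \<Psi> r" for r
    unfolding \<Psi>_def using L v Pa sig by (auto intro!: mult_nonneg_nonneg gg_nonneg divide_nonneg_nonneg)
  have \<Psi>m[measurable]: "\<Psi> \<in> borel_measurable borel" unfolding \<Psi>_def[abs_def] by measurable
  define D where "D \<omega> = L * (ln (1 + Pa * (cmod (Z \<omega>))\<^sup>2 / sigw2) - Pa * (cmod (Z \<omega>))\<^sup>2 / (Pa * (cmod (Z \<omega>))\<^sup>2 + sigw2))" for \<omega>
  have Dg: "D \<omega> = L * gg (Pa * (cmod (Z \<omega>))\<^sup>2 / sigw2)" for \<omega>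
    unfolding D_def by (rule Dfun_gg) (use sig Pa in auto)
  have Dnn: "0 \<le> D \<omega>" for \<omega> unfolding Dg using L Pa sig by (auto intro!: mult_nonneg_nonneg gg_nonneg)
  have Dm[measurable]: "D \<in> borel_measurable M" unfolding D_def[abs_def] by measurable
  have pw: "ennreal (L * gg (Pa * (cmod (Complex a b))\<^sup>2 / sigw2)) * ennreal (nd v (Re (Complex a b))) * ennreal (nd v (Im (Complex a b)))
       = ennreal (\<Psi> (a\<^sup>2 + b\<^sup>2))" for a b
  proof -
    have "ennreal (L * gg (Pa * (cmod (Complex a b))\<^sup>2 / sigw2)) * ennreal (nd v (Re (Complex a b))) * ennreal (nd v (Im (Complex a b)))
        = ennreal (L * gg (Pa * (cmod (Complex a b))\<^sup>2 / sigw2) * (nd v a * nd v b))"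
      using L Pa sig by (simp add: ennreal_mult'[symmetric] mult.assoc gg_nonneg)
    also have "\<dots> = ennreal (\<Psi> (a\<^sup>2 + b\<^sup>2))"
      unfolding \<Psi>_def nd_prod[OF v] by (simp add: cmod_power2 max_absorb1 sum_power2_ge_zero)
    finally show ?thesis .
  qed
  have pw2: "ennreal pi * (ennreal lam * ennreal (\<Psi> (lam * y) * indicator {0..} (lam * y)))
      = ennreal L * ennreal (gg (s * y) * exp (- y) * indicator {0..} y)" for y
  proof (cases "0 \<le> y")
    case True
    have "pi * (lam * (\<Psi> (lam * y) * indicator {0..} (lam * y))) = L * (gg (s * y) * exp (- y) * indicator {0..} y)"
      using True lam v unfolding \<Psi>_def v_def s_def by (simp add: field_simps)
    then show ?thesis using True lam L \<Psi>nn
      by (simp add: ennreal_mult'[symmetric] mult.assoc del: ennreal_mult')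
  next
    case False
    then have "lam * y < 0" using lam by (simp add: mult_pos_neg)
    then show ?thesis using False by (simp add: indicator_def)
  qed
  have "(\<integral>\<^sup>+\<omega>. ennreal (D \<omega>) \<partial>M) = (\<integral>\<^sup>+\<omega>. (\<lambda>z. ennreal (L * gg (Pa * (cmod z)\<^sup>2 / sigw2))) (Z \<omega>) \<partial>M)"
    by (simp add: Dg)
  also have "\<dots> = I2 (\<lambda>z. ennreal (L * gg (Pa * (cmod z)\<^sup>2 / sigw2)) * ennreal (nd v (Re z)) * ennreal (nd v (Im z)))"
    using CNZ unfolding CN_def v_def by auto
  also have "\<dots> = (\<integral>\<^sup>+a. \<integral>\<^sup>+b. ennreal (\<Psi> (a\<^sup>2 + b\<^sup>2)) \<partial>lborel \<partial>lborel)"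
    unfolding I2_def pw ..
  also have "\<dots> = ennreal pi * (\<integral>\<^sup>+r. ennreal (\<Psi> r * indicator {0..} r) \<partial>lborel)"
    by (rule radial[OF \<Psi>m \<Psi>nn])
  also have "(\<integral>\<^sup>+r. ennreal (\<Psi> r * indicator {0..} r) \<partial>lborel)
      = ennreal lam * (\<integral>\<^sup>+y. ennreal (\<Psi> (lam * y) * indicator {0..} (lam * y)) \<partial>lborel)"
    using nn_integral_real_affine[of "\<lambda>r. ennreal (\<Psi> r * indicator {0..} r)" lam 0] lam by simp
  also have "ennreal pi * (ennreal lam * (\<integral>\<^sup>+y. ennreal (\<Psi> (lam * y) * indicator {0..} (lam * y)) \<partial>lborel))
      = (\<integral>\<^sup>+y. ennreal pi * (ennreal lam * ennreal (\<Psi> (lam * y) * indicator {0..} (lam * y))) \<partial>lborel)"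
    by (subst nn_integral_cmult[symmetric], measurable, subst nn_integral_cmult[symmetric]) auto
  also have "\<dots> = (\<integral>\<^sup>+y. ennreal L * ennreal (gg (s * y) * exp (- y) * indicator {0..} y) \<partial>lborel)"
    unfolding pw2 ..
  also have "\<dots> = ennreal L * Fn s"
    unfolding Fn_def by (rule nn_integral_cmult) measurable
  also have "\<dots> = ennreal (L * fr s)"
    using L by (simp add: Fn_eq[OF s] ennreal_mult')
  finally have nnD: "(\<integral>\<^sup>+\<omega>. ennreal (D \<omega>) \<partial>M) = ennreal (L * fr s)" .
  have ED: "integral\<^sup>L M D = L * fr s"
    using integral_eq_nn_integral[OF Dm] Dnn nnD fr_pos[OF s] L by simp
  have feb: "L * fr epsbar = 2 * eps\<^sup>2"
    using assms(14) L unfolding fr_def by (simp add: field_simps)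
  have key: "integral\<^sup>L M D \<le> 2 * eps\<^sup>2 \<longleftrightarrow> Pa / sigw2 * lam \<le> epsbar"
    unfolding ED feb[symmetric] s_def[symmetric] using L fr_le_iff[OF s eb] by simp
  show ?thesis
    unfolding Let_def using key unfolding D_def Z_def lam_def by simp
qed

end
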